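(* Let $n\ge 2$, $r>0$, $I_n=\{\bm{x}\in\mathbb{R}^n: |x_i|\le r,\ i=1,\dots,n\}$, and let $f(\bm{x})=g(\bm{x})\prod_{1\le i<j\le n}(x_i^2-x_j^2)^2$, where $g\in C(I_n)$ and $g\ge 0$ on $I_n$. Then $h\equiv 0$ is a best one-sided $L^1$-approximant from below to $f$ with respect to $\mathcal{H}(I_n)$, i.e. $0\le f$ on $I_n$ and $\|f\|_1\le\|f-h\|_1$ for every $h\in\mathcal{H}_-(I_n,f)$.
   Context: $\mathcal{H}(I_n)$ is the space of functions harmonic ($C^2$ with vanishing Laplacian) in some domain containing $I_n$; $\mathcal{H}_-(I_n,f)=\{h\in\mathcal{H}(I_n): h\le f \text{ on } I_n\}$; $\|u\|_1=\int_{I_n}|u|\,d\lambda_n$ with $\lambda_n$ Lebesgue measure. *)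

theory Defs
  imports "HOL-Analysis.Analysis"
begin

definition partial :: "(real^'n \<Rightarrow> real) \<Rightarrow> 'n \<Rightarrow> real^'n \<Rightarrow> real" where
  "partial h i x = deriv (\<lambda>t. h (x + t *\<^sub>R axis i 1)) 0"

definition harmonic_on :: "(real^'n) set \<Rightarrow> (real^'n \<Rightarrow> real) \<Rightarrow> bool" where
  "harmonic_on S h \<longleftrightarrow> open S \<and> continuous_on S h
     \<and> (\<forall>i. \<forall>x\<in>S. (\<lambda>t. h (x + t *\<^sub>R axis i 1)) differentiable (at 0))
     \<and> (\<forall>i. continuous_on S (partial h i))
     \<and> (\<forall>i j. \<forall>x\<in>S. (\<lambda>t. partial h i (x + t *\<^sub>R axis j 1)) differentiable (at 0))
     \<and> (\<forall>i j. continuous_on S (partial (partial h i) j))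
     \<and> (\<forall>x\<in>S. (\<Sum>i\<in>UNIV. partial (partial h i) i x) = 0)"

definition harm :: "(real^'n) set \<Rightarrow> (real^'n \<Rightarrow> real) set" where
  "harm I = {h. \<exists>S. I \<subseteq> S \<and> harmonic_on S h}"

definition harm_below :: "(real^'n) set \<Rightarrow> (real^'n \<Rightarrow> real) \<Rightarrow> (real^'n \<Rightarrow> real) set" where
  "harm_below I f = {h \<in> harm I. \<forall>x\<in>I. h x \<le> f x}"

definition L1_norm :: "(real^'n) set \<Rightarrow> (real^'n \<Rightarrow> real) \<Rightarrow> real" where
  "L1_norm I u = integral\<^sup>L (lebesgue_on I) (\<lambda>x. \<bar>u x\<bar>)"

end

theory Submission
  imports Defs
begin

lemma lborel_Icc_eq_integral:
  fixes G :: "real \<Rightarrow> real"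
  assumes "continuous_on {c..d} G"
  shows "integral\<^sup>L lborel (\<lambda>t. indicator {c..d} t * G t) = integral {c..d} G"
  using set_borel_integral_eq_integral(2)[OF borel_integrable_atLeastAtMost'[OF assms]]
  by (simp add: set_lebesgue_integral_def)

lemma one_dim:
  fixes u v w :: "real \<Rightarrow> real"
  assumes du: "\<And>t. t \<in> {-r..r} \<Longrightarrow> (u has_real_derivative v t) (at t)"
    and dv: "\<And>t. t \<in> {-r..r} \<Longrightarrow> (v has_real_derivative w t) (at t)"
    and cw: "continuous_on {-r..r} w"
    and A: "0 \<le> A" "A \<le> r"
  shows "integral {-r..r} (\<lambda>t. w t * ((r - max A \<bar>t\<bar>)^2/2))
     = integral {A..r} u + integral {-r..-A} u - (r - A) * (u A + u (-A))"
proof -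
  let ?P = "\<lambda>t. w t * ((r - max A \<bar>t\<bar>)^2/2)"
  have cu: "continuous_on {-r..r} u"
    using du by (meson DERIV_continuous continuous_at_imp_continuous_on)
  have cv: "continuous_on {-r..r} v"
    using dv by (meson DERIV_continuous continuous_at_imp_continuous_on)
  have cP: "continuous_on {-r..r} ?P"
    by (intro continuous_intros cw) auto
  have s1: "{-r..-A} \<subseteq> {-r..r}" "{-A..A} \<subseteq> {-r..r}" "{A..r} \<subseteq> {-r..r}" using A by auto
  have split: "integral {-r..r} ?P = integral {-r..-A} ?P + integral {-A..A} ?P + integral {A..r} ?P"
  proof -
    have i: "?P integrable_on {-r..r}" by (rule integrable_continuous_real[OF cP])
    have "integral {-r..A} ?P + integral {A..r} ?P = integral {-r..r} ?P"
      by (rule Henstock_Kurzweil_Integration.integral_combine) (use A i in auto)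
    moreover have "integral {-r..-A} ?P + integral {-A..A} ?P = integral {-r..A} ?P"
      by (rule Henstock_Kurzweil_Integration.integral_combine) (use A integrable_on_subinterval[OF i, of "-r" A] in auto)
    ultimately show ?thesis by simp
  qed
  have right: "integral {A..r} ?P = integral {A..r} u - (v A * (r-A)^2/2 + u A * (r - A))"
  proof -
    let ?F = "\<lambda>t. v t * (r-t)^2/2 + u t * (r - t)"
    have "((\<lambda>t. w t * (r-t)^2/2 - u t) has_integral (?F r - ?F A)) {A..r}"
    proof (rule fundamental_theorem_of_calculus)
      show "A \<le> r" by fact
      fix t assume t: "t \<in> {A..r}"
      then have t': "t \<in> {-r..r}" using A by auto
      have "(?F has_real_derivative (w t * (r-t)^2/2 + v t * (2*(r-t)*(-1))/2 + (v t * (r-t) + u t * (-1)))) (at t)"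
        by (intro derivative_eq_intros du[OF t'] dv[OF t']) (auto intro: du[OF t'] dv[OF t'])
      moreover have "(w t * (r-t)^2/2 + v t * (2*(r-t)*(-1))/2 + (v t * (r-t) + u t * (-1))) = (w t * (r-t)^2/2 - u t)"
        by (simp add: field_simps)
      ultimately have "(?F has_real_derivative (w t * (r-t)^2/2 - u t)) (at t)" by (simp only:)
      then show "(?F has_vector_derivative (w t * (r-t)^2/2 - u t)) (at t within {A..r})"
        unfolding has_real_derivative_iff_has_vector_derivative[symmetric] by (rule has_field_derivative_at_within)
    qed
    then have "integral {A..r} (\<lambda>t. w t * (r-t)^2/2 - u t) = ?F r - ?F A" by (rule integral_unique)
    moreover have "integral {A..r} (\<lambda>t. w t * (r-t)^2/2 - u t) = integral {A..r} ?P - integral {A..r} u"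
    proof -
      have "integral {A..r} (\<lambda>t. w t * (r-t)^2/2 - u t) = integral {A..r} (\<lambda>t. ?P t - u t)"
        using A by (intro integral_cong) (auto simp: max_def)
      also have "\<dots> = integral {A..r} ?P - integral {A..r} u"
        by (intro integral_diff integrable_continuous_real continuous_on_subset[OF cP s1(3)]
            continuous_on_subset[OF cu s1(3)])
      finally show ?thesis .
    qed
    ultimately show ?thesis by simp
  qed
  have left: "integral {-r..-A} ?P = integral {-r..-A} u + (v (-A) * (r-A)^2/2 - u (-A) * (r - A))"
  proof -
    let ?F = "\<lambda>t. v t * (r+t)^2/2 - u t * (r + t)"
    have "((\<lambda>t. w t * (r+t)^2/2 - u t) has_integral (?F (-A) - ?F (-r))) {-r..-A}"
    proof (rule fundamental_theorem_of_calculus)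
      show "-r \<le> -A" using A by simp
      fix t assume t: "t \<in> {-r..-A}"
      then have t': "t \<in> {-r..r}" using A by auto
      have "(?F has_real_derivative (w t * (r+t)^2/2 + v t * (2*(r+t))/2 - (v t * (r+t) + u t))) (at t)"
        by (intro derivative_eq_intros du[OF t'] dv[OF t']) (auto intro: du[OF t'] dv[OF t'])
      moreover have "(w t * (r+t)^2/2 + v t * (2*(r+t))/2 - (v t * (r+t) + u t)) = (w t * (r+t)^2/2 - u t)"
        by (simp add: field_simps)
      ultimately have "(?F has_real_derivative (w t * (r+t)^2/2 - u t)) (at t)" by (simp only:)
      then show "(?F has_vector_derivative (w t * (r+t)^2/2 - u t)) (at t within {-r..-A})"
        unfolding has_real_derivative_iff_has_vector_derivative[symmetric] by (rule has_field_derivative_at_within)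
    qed
    then have "integral {-r..-A} (\<lambda>t. w t * (r+t)^2/2 - u t) = ?F (-A) - ?F (-r)" by (rule integral_unique)
    moreover have "integral {-r..-A} (\<lambda>t. w t * (r+t)^2/2 - u t) = integral {-r..-A} ?P - integral {-r..-A} u"
    proof -
      have "integral {-r..-A} (\<lambda>t. w t * (r+t)^2/2 - u t) = integral {-r..-A} (\<lambda>t. ?P t - u t)"
        using A by (intro integral_cong) (auto simp: max_def)
      also have "\<dots> = integral {-r..-A} ?P - integral {-r..-A} u"
        by (intro integral_diff integrable_continuous_real continuous_on_subset[OF cP s1(1)]
            continuous_on_subset[OF cu s1(1)])
      finally show ?thesis .
    qed
    ultimately show ?thesis by (simp add: algebra_simps)
  qed
  have mid: "integral {-A..A} ?P = (r-A)^2/2 * (v A - v (-A))"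
  proof -
    have "(?P has_integral ((r-A)^2/2 * v A - (r-A)^2/2 * v (-A))) {-A..A}"
    proof (rule fundamental_theorem_of_calculus)
      show "-A \<le> A" using A by simp
      fix t assume t: "t \<in> {-A..A}"
      then have t': "t \<in> {-r..r}" using A by auto
      have "((\<lambda>t. (r-A)^2/2 * v t) has_real_derivative ((r-A)^2/2 * w t)) (at t)"
        by (intro derivative_eq_intros dv[OF t']) (auto intro: dv[OF t'])
      moreover have "(r-A)^2/2 * w t = w t * ((r - max A \<bar>t\<bar>)^2/2)"
        using t by (subgoal_tac "max A \<bar>t\<bar> = A") auto
      ultimately have "((\<lambda>t. (r-A)^2/2 * v t) has_real_derivative (w t * ((r - max A \<bar>t\<bar>)^2/2))) (at t)" by (simp only:)
      then show "((\<lambda>t. (r-A)^2/2 * v t) has_vector_derivative (w t * ((r - max A \<bar>t\<bar>)^2/2))) (at t within {-A..A})"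
        unfolding has_real_derivative_iff_has_vector_derivative[symmetric] by (rule has_field_derivative_at_within)
    qed
    then have "integral {-A..A} ?P = (r-A)^2/2 * v A - (r-A)^2/2 * v (-A)" by (rule integral_unique)
    then show ?thesis by (simp add: algebra_simps)
  qed
  show ?thesis
    unfolding split right left mid by (simp add: field_simps power2_eq_square)
qed


lemma fub_zero:
  fixes F :: "'a::euclidean_space \<Rightarrow> real" and b :: 'a
  assumes b: "b \<in> Basis" and F: "integrable lborel F"
    and line: "\<And>p. p \<bullet> b = 0 \<Longrightarrow> (\<integral>y. F (p + y *\<^sub>R b) \<partial>lborel) = 0"
  shows "integral\<^sup>L lborel F = 0"
proof -
  let ?S = "\<lambda>f. \<Sum>c\<in>Basis. f c *\<^sub>R c :: 'a"
  let ?P = "Pi\<^sub>M Basis (\<lambda>_::'a. lborel::real measure)"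
  have meas: "?S \<in> measurable ?P borel"
    by measurable
  have Fm: "F \<in> borel_measurable borel" using F by auto
  have eq: "integral\<^sup>L lborel F = integral\<^sup>L ?P (\<lambda>f. F (?S f))"
    by (subst lborel_eq) (rule integral_distr[OF meas Fm])
  have intP: "integrable ?P (\<lambda>f. F (?S f))"
    using F by (subst (asm) lborel_eq) (simp add: integrable_distr_eq[OF meas Fm])
  interpret product_sigma_finite "\<lambda>_::'a. lborel::real measure"
    by (simp add: product_sigma_finite_def lborel.sigma_finite_measure_axioms)
  let ?J = "Basis - {b}"
  have BJ: "Basis = insert b ?J" using b by auto
  have "integral\<^sup>L ?P (\<lambda>f. F (?S f)) = (\<integral>x. (\<integral>y. F (?S (x(b:=y))) \<partial>lborel) \<partial>Pi\<^sub>M ?J (\<lambda>_. lborel))"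
    using intP BJ product_integral_insert[of ?J b "\<lambda>f. F (?S f)"] by simp
  also have "\<dots> = (\<integral>x. (0::real) \<partial>Pi\<^sub>M ?J (\<lambda>_. lborel::real measure))"
  proof -
    have inner: "(\<integral>y. F (?S (x(b:=y))) \<partial>lborel) = 0" for x :: "'a \<Rightarrow> real"
    proof -
    let ?p = "\<Sum>c\<in>?J. x c *\<^sub>R c"
    have S: "?S (x(b:=y)) = ?p + y *\<^sub>R b" for y
    proof -
      have "?S (x(b:=y)) = (x(b:=y)) b *\<^sub>R b + (\<Sum>c\<in>?J. (x(b:=y)) c *\<^sub>R c)"
        by (rule sum.remove[OF finite_Basis b])
      also have "(\<Sum>c\<in>?J. (x(b:=y)) c *\<^sub>R c) = ?p"
        by (intro sum.cong) auto
      finally show ?thesis by simp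
    qed
    have pb: "?p \<bullet> b = 0"
      by (simp add: inner_sum_left inner_not_same_Basis b)
    show ?thesis
      unfolding S by (rule line[OF pb])
    qed
    then show ?thesis by simp
  qed
  also have "\<dots> = 0" by simp
  finally show ?thesis using eq by simp
qed


lemma continuous_on_Max_fam:
  fixes F :: "'i \<Rightarrow> 'a::topological_space \<Rightarrow> real"
  assumes "finite J" "J \<noteq> {}" "\<And>j. j \<in> J \<Longrightarrow> continuous_on S (F j)"
  shows "continuous_on S (\<lambda>x. Max ((\<lambda>j. F j x) ` J))"
  using assms
proof (induction J rule: finite_ne_induct)
  case (singleton j) then show ?case by simp
next
  case (insert k J)
  have "(\<lambda>x. Max ((\<lambda>j. F j x) ` insert k J)) = (\<lambda>x. max (F k x) (Max ((\<lambda>j. F j x) ` J)))"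
    using insert.hyps by (auto simp: Max_insert)
  then show ?case using insert by (auto intro!: continuous_on_max)
qed

definition amax :: "'n::finite \<Rightarrow> real^'n \<Rightarrow> real" where
  "amax i x = Max ((\<lambda>j. \<bar>x$j\<bar>) ` (UNIV - {i}))"
definition mx :: "real^'n::finite \<Rightarrow> real" where
  "mx x = Max (range (\<lambda>j. \<bar>x$j\<bar>))"
definition upd :: "real^'n::finite \<Rightarrow> 'n \<Rightarrow> real \<Rightarrow> real^'n" where
  "upd x i t = x + (t - x$i) *\<^sub>R axis i 1"
definition Rset :: "'n::{finite,linorder} \<Rightarrow> (real^'n::{finite,linorder}) set" where
  "Rset i = {x. \<forall>j. (j < i \<longrightarrow> \<bar>x$j\<bar> < \<bar>x$i\<bar>) \<and> (i < j \<longrightarrow> \<bar>x$j\<bar> \<le> \<bar>x$i\<bar>)}"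

lemma upd_nth: "(upd x i t) $ j = (if j = i then t else x $ j)"
  by (simp add: upd_def axis_def)

lemma card2_ne:
  assumes "CARD('n::finite) \<ge> 2" shows "(UNIV::'n set) - {i} \<noteq> {}"
proof
  assume "(UNIV::'n set) - {i} = {}"
  then have "(UNIV::'n set) = {i}" by auto
  then have "card (UNIV::'n set) = card {i}" by (rule arg_cong)
  then have "card (UNIV::'n set) = 1" by simp
  with assms show False by simp
qed

lemma mx_eq:
  assumes "CARD('n::finite) \<ge> 2" shows "mx (x::real^'n) = max \<bar>x$i\<bar> (amax i x)"
proof -
  have "range (\<lambda>j. \<bar>x$j\<bar>) = insert \<bar>x$i\<bar> ((\<lambda>j. \<bar>x$j\<bar>) ` (UNIV - {i}))" by auto
  then show ?thesis using card2_ne[OF assms, of i]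
    by (simp add: mx_def amax_def Max_insert)
qed

lemma amax_attained:
  assumes "CARD('n::finite) \<ge> 2" shows "\<exists>j. j \<noteq> i \<and> \<bar>(x::real^'n)$j\<bar> = amax i x"
proof -
  have "amax i x \<in> (\<lambda>j. \<bar>x$j\<bar>) ` (UNIV - {i})"
    unfolding amax_def using card2_ne[OF assms, of i] by (intro Max_in) auto
  then show ?thesis by auto
qed

lemma amax_ge: "j \<noteq> i \<Longrightarrow> \<bar>(x::real^'n::finite)$j\<bar> \<le> amax i x"
  unfolding amax_def by (intro Max_ge) auto

lemma amax_le:
  assumes "CARD('n::finite) \<ge> 2" "\<And>j. j \<noteq> i \<Longrightarrow> \<bar>(x::real^'n)$j\<bar> \<le> c"
  shows "amax i x \<le> c"
  unfolding amax_def using card2_ne[OF assms(1), of i] assms(2) by (subst Max_le_iff) auto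

lemma amax_nonneg:
  assumes "CARD('n::finite) \<ge> 2" shows "0 \<le> amax i (x::real^'n)"
  using amax_attained[OF assms, of i x] by force

lemma amax_cong: "(\<And>j. j \<noteq> i \<Longrightarrow> x$j = y$j) \<Longrightarrow> amax i (x::real^'n::finite) = amax i y"
  unfolding amax_def by (intro arg_cong[where f=Max] image_cong) auto

lemma continuous_amax:
  assumes "CARD('n::finite) \<ge> 2" shows "continuous_on S (amax i :: real^'n \<Rightarrow> real)"
  unfolding amax_def[abs_def]
  by (rule continuous_on_Max_fam) (use card2_ne[OF assms] in \<open>auto intro!: continuous_intros\<close>)

lemma continuous_mx: "continuous_on S (mx :: real^'n::finite \<Rightarrow> real)"
  unfolding mx_def[abs_def]
  by (rule continuous_on_Max_fam) (auto intro!: continuous_intros)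

lemma Rset_sum: "(\<Sum>i\<in>UNIV. indicator (Rset i) x) = (1::real)"
proof -
  let ?M = "Max (range (\<lambda>j. \<bar>x$j\<bar>))"
  let ?K = "{j. \<bar>x$j\<bar> = ?M}"
  have "?M \<in> range (\<lambda>j. \<bar>x$j\<bar>)" by (rule Max_in) simp_all
  then obtain j0 where "?M = \<bar>x$j0\<bar>" by blast
  then have Kne: "?K \<noteq> {}" by auto
  define i0 where "i0 = Min ?K"
  have i0K: "i0 \<in> ?K" unfolding i0_def using Kne by (intro Min_in) auto
  have i0R: "x \<in> Rset i0"
  proof -
    have "\<bar>x$j\<bar> \<le> ?M" for j by (intro Max_ge) auto
    moreover have "j < i0 \<Longrightarrow> \<bar>x$j\<bar> \<noteq> ?M" for j
      using Min_le[of ?K j] unfolding i0_def[symmetric] by force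
    ultimately show ?thesis using i0K unfolding Rset_def
      by (auto simp: order.strict_iff_order)
  qed
  have uniq: "x \<in> Rset i \<Longrightarrow> i = i0" for i
  proof (rule ccontr)
    assume xi: "x \<in> Rset i" and ne: "i \<noteq> i0"
    show False
    proof (cases "i < i0")
      case True
      have "\<bar>x$i0\<bar> \<le> \<bar>x$i\<bar>" using xi True unfolding Rset_def by blast
      moreover have "\<bar>x$i\<bar> < \<bar>x$i0\<bar>" using i0R True unfolding Rset_def by blast
      ultimately show ?thesis by simp
    next
      case False
      then have "i0 < i" using ne by auto
      have "\<bar>x$i\<bar> \<le> \<bar>x$i0\<bar>" using i0R \<open>i0 < i\<close> unfolding Rset_def by blast
      moreover have "\<bar>x$i0\<bar> < \<bar>x$i\<bar>" using xi \<open>i0 < i\<close> unfolding Rset_def by blast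
      ultimately show ?thesis by simp
    qed
  qed
  have "(\<Sum>i\<in>UNIV. indicator (Rset i) x) = (\<Sum>i\<in>UNIV. if i = i0 then (1::real) else 0)"
  proof (rule sum.cong[OF refl])
    fix i :: 'a
    show "indicator (Rset i) x = (if i = i0 then (1::real) else 0)"
    proof (cases "i = i0")
      case True then show ?thesis using i0R by simp
    next
      case False then have "x \<notin> Rset i" using uniq by blast
      with False show ?thesis by simp
    qed
  qed
  then show ?thesis by simp
qed

lemma Rset_borel: "Rset i \<in> sets borel"
proof -
  have "Rset i = (\<Inter>j\<in>UNIV. {x. (j < i \<longrightarrow> \<bar>x$j\<bar> < \<bar>x$i\<bar>) \<and> (i < j \<longrightarrow> \<bar>x$j\<bar> \<le> \<bar>x$i\<bar>)})"
    unfolding Rset_def by blast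
  also have "\<dots> \<in> sets borel"
  proof (intro sets.finite_INT)
    fix j
    have o: "{x::(real,'a) vec. \<bar>x$j\<bar> < \<bar>x$i\<bar>} \<in> sets borel"
      by (intro borel_open open_Collect_less continuous_intros)
    have c: "{x::(real,'a) vec. \<bar>x$j\<bar> \<le> \<bar>x$i\<bar>} \<in> sets borel"
      by (intro borel_closed closed_Collect_le continuous_intros)
    show "{x::(real,'a) vec. (j < i \<longrightarrow> \<bar>x$j\<bar> < \<bar>x$i\<bar>) \<and> (i < j \<longrightarrow> \<bar>x$j\<bar> \<le> \<bar>x$i\<bar>)} \<in> sets borel"
    proof (cases "j < i")
      case True
      then have "\<not> i < j" by auto
      with True o show ?thesis by simp
    next
      case False
      show ?thesis
      proof (cases "i < j")
        case True with False c show ?thesis by simp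
      next
        case F2: False with False show ?thesis by simp
      qed
    qed
  qed simp_all
  finally show ?thesis .
qed

lemma deriv_line:
  fixes G :: "real^'n::finite \<Rightarrow> real"
  assumes d: "\<And>y. y \<in> S \<Longrightarrow> (\<lambda>t. G (y + t *\<^sub>R axis i 1)) differentiable (at 0)"
    and p: "p + t0 *\<^sub>R axis i 1 \<in> S"
  shows "((\<lambda>t. G (p + t *\<^sub>R axis i 1)) has_real_derivative partial G i (p + t0 *\<^sub>R axis i 1)) (at t0)"
proof -
  let ?y = "p + t0 *\<^sub>R axis i 1"
  have "((\<lambda>s. G (?y + s *\<^sub>R axis i 1)) has_real_derivative partial G i ?y) (at 0)"
    unfolding partial_def using d[OF p] by (simp add: DERIV_deriv_iff_real_differentiable)
  moreover have "(\<lambda>s. G (?y + s *\<^sub>R axis i 1)) = (\<lambda>s. G (p + (s + t0) *\<^sub>R axis i 1))"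
    by (simp add: algebra_simps scaleR_add_left)
  ultimately have "((\<lambda>s. G (p + (s + t0) *\<^sub>R axis i 1)) has_real_derivative partial G i ?y) (at 0)"
    by simp
  then show ?thesis using DERIV_shift[of "\<lambda>t. G (p + t *\<^sub>R axis i 1)" "partial G i ?y" 0 t0] by simp
qed


lemma harm_int_nonpos:
  fixes r :: real and I S :: "(real^('n::{finite,linorder})) set" and h :: "real^('n::{finite,linorder}) \<Rightarrow> real"
  assumes card: "CARD('n) \<ge> 2" and r: "r > 0"
    and Idef: "I = {x. \<forall>i. \<bar>x $ i\<bar> \<le> r}"
    and IS: "I \<subseteq> S" and hS: "harmonic_on S h"
    and hD: "\<And>x i j. x \<in> I \<Longrightarrow> i \<noteq> j \<Longrightarrow> \<bar>x$i\<bar> = \<bar>x$j\<bar> \<Longrightarrow> h x \<le> 0"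
  shows "integral\<^sup>L lborel (\<lambda>x. indicator I x * h x) \<le> 0"
proof -
  from hS have oS: "open S" and hc: "continuous_on S h"
    and D1: "\<And>i x. x \<in> S \<Longrightarrow> (\<lambda>t. h (x + t *\<^sub>R axis i 1)) differentiable (at 0)"
    and D2: "\<And>i j x. x \<in> S \<Longrightarrow> (\<lambda>t. partial h i (x + t *\<^sub>R axis j 1)) differentiable (at 0)"
    and C2: "\<And>i j. continuous_on S (partial (partial h i) j)"
    and LAP: "\<And>x. x \<in> S \<Longrightarrow> (\<Sum>i\<in>UNIV. partial (partial h i) i x) = 0"
    unfolding harmonic_on_def by auto
  have Icbox: "I = cbox (\<chi> i. -r) (\<chi> i. r)"
    unfolding Idef by (auto simp: mem_box_cart abs_le_iff minus_le_iff[of _ r])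
  have cI: "compact I" unfolding Icbox by simp
  have bI: "I \<in> sets borel" unfolding Icbox by simp
  have hcI: "continuous_on I h" using hc IS by (rule continuous_on_subset)
  define w where "w i = partial (partial h i) i" for i
  define \<Phi> where "\<Phi> x = (r - mx x)^2 / 2" for x :: "(real,'n) vec"
  define T where "T i x = (r - amax i x) * (h (upd x i (amax i x)) + h (upd x i (- amax i x))) / (2*r)" for i x
  have updI: "upd x i s \<in> I" if "x \<in> I" "\<bar>s\<bar> \<le> r" for x i s
    using that unfolding Idef by (auto simp: upd_nth)
  have amaxI: "amax i x \<le> r" if "x \<in> I" for x i
    using that unfolding Idef by (intro amax_le[OF card]) auto
  have cont_upd: "continuous_on U (\<lambda>x. upd x i (c x))" if "continuous_on U c" for U c i
    unfolding upd_def by (intro continuous_intros that)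
  have cT: "continuous_on I (T i)" for i
  proof -
    have ca: "continuous_on I (amax i)" by (rule continuous_amax[OF card])
    have c1: "continuous_on I (\<lambda>x. h (upd x i (amax i x)))"
      by (rule continuous_on_compose2[OF hcI cont_upd[OF ca]])
         (auto intro!: updI simp: amaxI amax_nonneg[OF card])
    have c2: "continuous_on I (\<lambda>x. h (upd x i (- amax i x)))"
      by (rule continuous_on_compose2[OF hcI cont_upd]) 
         (auto intro!: updI continuous_intros ca simp: amaxI amax_nonneg[OF card])
    show ?thesis unfolding T_def[abs_def] by (intro continuous_intros ca c1 c2) (use r in auto)
  qed
  have cPhi: "continuous_on U \<Phi>" for U unfolding \<Phi>_def[abs_def] by (intro continuous_intros continuous_mx) auto
  have cw: "continuous_on I (w i)" for i
    unfolding w_def using C2 IS by (rule continuous_on_subset)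
  have int1: "integrable lborel (\<lambda>x. indicator I x * (w i x * \<Phi> x + T i x))" for i
    using borel_integrable_compact[OF cI, of "\<lambda>x. w i x * \<Phi> x + T i x"]
    by (simp add: continuous_intros cw cPhi cT)
  have inth: "integrable lborel (\<lambda>x. indicator I x * h x)"
    using borel_integrable_compact[OF cI hcI] by simp
  have int2: "integrable lborel (\<lambda>x. indicator (I \<inter> Rset i) x * h x)" for i
  proof -
    have "integrable lborel (\<lambda>x. indicator (Rset i) x *\<^sub>R (indicator I x * h x))"
      by (rule integrable_mult_indicator) (use Rset_borel inth in auto)
    then show ?thesis by (simp add: indicator_inter_arith mult.assoc mult.commute mult.left_commute)
  qed
  have Tnp: "T i x \<le> 0" if xI: "x \<in> I" for i x
  proof -
    let ?A = "amax i x"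
    obtain j0 where j0: "j0 \<noteq> i" "\<bar>x$j0\<bar> = ?A" using amax_attained[OF card] by blast
    have A0: "0 \<le> ?A" "?A \<le> r" using amax_nonneg[OF card] amaxI[OF xI] by auto
    have "h (upd x i s) \<le> 0" if "\<bar>s\<bar> = ?A" for s
    proof (rule hD[of _ i j0])
      show "upd x i s \<in> I" using updI[OF xI] that A0 by auto
      show "i \<noteq> j0" using j0 by simp
      show "\<bar>upd x i s $ i\<bar> = \<bar>upd x i s $ j0\<bar>" using that j0 by (simp add: upd_nth)
    qed
    then have "h (upd x i ?A) + h (upd x i (- ?A)) \<le> 0" using A0 by (simp add: add_nonpos_nonpos)
    then show ?thesis unfolding T_def using A0 r
      by (intro divide_nonpos_pos mult_nonneg_nonpos) auto
  qed
  define K where "K i x = indicator I x * (w i x * \<Phi> x + T i x) - indicator (I \<inter> Rset i) x * h x" for i x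
  have intK: "integrable lborel (K i)" for i
    unfolding K_def[abs_def] using int1 int2 by (intro Bochner_Integration.integrable_diff)
  have line: "(\<integral>t. K i (p + t *\<^sub>R axis i 1) \<partial>lborel) = 0" if p0: "p$i = 0" for i p
  proof -
    define q where "q t = p + t *\<^sub>R axis i 1" for t
    have qn: "(q t)$j = (if j = i then t else p$j)" for t j
      unfolding q_def using p0 by (simp add: axis_def)
    have qa: "amax i (q t) = amax i p" for t by (rule amax_cong) (simp add: qn)
    have qu: "upd (q t) i s = upd p i s" for t s by (simp add: vec_eq_iff upd_nth qn)
    have qT: "T i (q t) = T i p" for t unfolding T_def qa qu ..
    have uq: "upd p i s = q s" for s by (simp add: vec_eq_iff upd_nth qn p0)
    show ?thesis
    proof (cases "\<forall>j. j \<noteq> i \<longrightarrow> \<bar>p$j\<bar> \<le> r")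
      case False
      then obtain j where j: "j \<noteq> i" "\<not> \<bar>p$j\<bar> \<le> r" by blast
      have "q t \<notin> I" for t using j unfolding Idef by (auto simp: qn)
      then have "K i (q t) = 0" for t unfolding K_def by simp
      then show ?thesis unfolding q_def[symmetric] by simp
    next
      case True
      have qI: "q t \<in> I \<longleftrightarrow> \<bar>t\<bar> \<le> r" for t using True unfolding Idef by (auto simp: qn)
      define A where "A = amax i p"
      have A0: "0 \<le> A" "A \<le> r" unfolding A_def using amax_nonneg[OF card] amax_le[OF card, of i p r] True by auto
      have qPhi: "\<Phi> (q t) = (r - max A \<bar>t\<bar>)^2/2" for t
        unfolding \<Phi>_def mx_eq[OF card, of _ i] qa A_def by (simp add: qn max.commute)
      have qR: "q t \<in> Rset i \<longleftrightarrow> A < \<bar>t\<bar>" if "t \<noteq> A" "t \<noteq> -A" for t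
      proof
        assume R: "q t \<in> Rset i"
        show "A < \<bar>t\<bar>"
        proof (rule ccontr)
          assume "\<not> A < \<bar>t\<bar>"
          then have lt: "\<bar>t\<bar> < A" using that by (auto simp: abs_if split: if_splits)
          obtain j0 where j0: "j0 \<noteq> i" "\<bar>p$j0\<bar> = A" using amax_attained[OF card, of i p] A_def by auto
          show False
          proof (cases "j0 < i")
            case True
            then have "\<bar>q t $ j0\<bar> < \<bar>q t $ i\<bar>" using R unfolding Rset_def by blast
            then show False using lt j0 by (simp add: qn)
          next
            case False
            then have "i < j0" using j0 by auto
            then have "\<bar>q t $ j0\<bar> \<le> \<bar>q t $ i\<bar>" using R unfolding Rset_def by blast
            then show False using lt j0 by (simp add: qn)
          qed
        qed
      next
        assume At: "A < \<bar>t\<bar>"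
        have "\<bar>p$j\<bar> \<le> A" if "j \<noteq> i" for j unfolding A_def using that by (rule amax_ge)
        then show "q t \<in> Rset i" unfolding Rset_def using At by (force simp: qn)
      qed
      define u where "u t = h (q t)" for t
      define v where "v t = partial h i (q t)" for t
      define ww where "ww t = w i (q t)" for t
      have qS: "q t \<in> S" if "t \<in> {-r..r}" for t using that qI IS by auto
      have cq: "continuous_on U q" for U unfolding q_def[abs_def] by (intro continuous_intros)
      have du: "(u has_real_derivative v t) (at t)" if "t \<in> {-r..r}" for t
        unfolding u_def[abs_def] v_def q_def
        by (rule deriv_line[where S=S]) (use D1 qS[OF that] in \<open>auto simp: q_def\<close>)
      have dv: "(v has_real_derivative ww t) (at t)" if "t \<in> {-r..r}" for t
        unfolding ww_def[abs_def] v_def[abs_def] w_def q_def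
        by (rule deriv_line[where S=S]) (use D2 qS[OF that] in \<open>auto simp: q_def\<close>)
      have cww: "continuous_on {-r..r} ww"
        unfolding ww_def[abs_def] w_def
        by (rule continuous_on_compose2[OF C2 cq]) (use qS in auto)
      have cu: "continuous_on {-r..r} u"
        unfolding u_def[abs_def]
        by (rule continuous_on_compose2[OF hc cq]) (use qS in auto)
      have cu1: "continuous_on {A..r} u" "continuous_on {-r..-A} u"
        using A0 by (auto intro: continuous_on_subset[OF cu])
      let ?W = "\<lambda>t. ww t * ((r - max A \<bar>t\<bar>)^2/2) + T i p"
      have cW: "continuous_on {-r..r} ?W" by (intro continuous_intros cww) auto
      define g where "g t = indicator {-r..r} t * ?W t - (indicator {A..r} t * u t + indicator {-r..-A} t * u t)" for t
      have iW: "integrable lborel (\<lambda>t. indicator {-r..r} t * ?W t)"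
        using borel_integrable_atLeastAtMost'[OF cW] by (simp add: set_integrable_def)
      have iu1: "integrable lborel (\<lambda>t. indicator {A..r} t * u t)"
        using borel_integrable_atLeastAtMost'[OF cu1(1)] by (simp add: set_integrable_def)
      have iu2: "integrable lborel (\<lambda>t. indicator {-r..-A} t * u t)"
        using borel_integrable_atLeastAtMost'[OF cu1(2)] by (simp add: set_integrable_def)
      have ig: "integrable lborel g" unfolding g_def[abs_def] using iW iu1 iu2 by auto
      have Kq_eq: "K i (q t) = g t" if "t \<noteq> A" "t \<noteq> -A" for t
      proof (cases "\<bar>t\<bar> \<le> r")
        case False
        then have "q t \<notin> I" using qI by auto
        moreover have "t \<notin> {-r..r}" "t \<notin> {A..r}" "t \<notin> {-r..-A}" using False A0 by auto
        ultimately show ?thesis unfolding K_def g_def by simp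
      next
        case True
        then have qtI: "q t \<in> I" using qI by auto
        have "indicator (I \<inter> Rset i) (q t) * h (q t) = indicator {A..r} t * u t + indicator {-r..-A} t * u t"
        proof (cases "A < \<bar>t\<bar>")
          case c: True
          then have "q t \<in> Rset i" using qR[OF that] by simp
          moreover have "(t \<in> {A..r} \<and> t \<notin> {-r..-A}) \<or> (t \<notin> {A..r} \<and> t \<in> {-r..-A})"
            using c True A0 by (auto simp: abs_if split: if_splits)
          ultimately show ?thesis using qtI unfolding u_def by auto
        next
          case c: False
          then have "q t \<notin> Rset i" using qR[OF that] by simp
          moreover have "t \<notin> {A..r}" "t \<notin> {-r..-A}" using c that by (auto simp: abs_if split: if_splits)
          ultimately show ?thesis by simp
        qed
        moreover have "t \<in> {-r..r}" using True by auto
        ultimately show ?thesis unfolding K_def g_def using qtI by (simp add: qPhi qT ww_def)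
      qed
      have mK: "(\<lambda>t. K i (q t)) \<in> borel_measurable lborel"
      proof -
        have "K i \<in> borel_measurable borel" using intK[of i] by auto
        moreover have "q \<in> borel_measurable lborel"
          using borel_measurable_continuous_onI[OF cq[of UNIV]] by simp
        ultimately show ?thesis by (rule measurable_compose[rotated])
      qed
      have "(\<integral>t. K i (q t) \<partial>lborel) = (\<integral>t. g t \<partial>lborel)"
      proof (rule integral_cong_AE[OF mK])
        show "g \<in> borel_measurable lborel" using ig by auto
        have "AE t in lborel. t \<noteq> A" by (rule AE_lborel_singleton)
        moreover have "AE t in lborel. t \<noteq> -A" by (rule AE_lborel_singleton)
        ultimately show "AE t in lborel. K i (q t) = g t" by eventually_elim (rule Kq_eq)
      qed
      also have "\<dots> = integral {-r..r} ?W - (integral {A..r} u + integral {-r..-A} u)"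
      proof -
        have "(\<integral>t. g t \<partial>lborel) = (\<integral>t. indicator {-r..r} t * ?W t \<partial>lborel)
            - ((\<integral>t. indicator {A..r} t * u t \<partial>lborel) + (\<integral>t. indicator {-r..-A} t * u t \<partial>lborel))"
          unfolding g_def using iW iu1 iu2
          by (simp only: Bochner_Integration.integral_diff Bochner_Integration.integral_add
              Bochner_Integration.integrable_add)
        then show ?thesis
          by (simp only: lborel_Icc_eq_integral[OF cW] lborel_Icc_eq_integral[OF cu1(1)]
            lborel_Icc_eq_integral[OF cu1(2)])
      qed
      also have "integral {-r..r} ?W = integral {-r..r} (\<lambda>t. ww t * ((r - max A \<bar>t\<bar>)^2/2)) + 2 * r * T i p"
      proof -
        have "integral {-r..r} ?W = integral {-r..r} (\<lambda>t. ww t * ((r - max A \<bar>t\<bar>)^2/2)) + integral {-r..r} (\<lambda>t. T i p)"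
          by (intro Henstock_Kurzweil_Integration.integral_add integrable_continuous_real)
             (auto intro!: continuous_intros cww)
        then show ?thesis using r by (simp add: content_real)
      qed
      also have "integral {-r..r} (\<lambda>t. ww t * ((r - max A \<bar>t\<bar>)^2/2))
          = integral {A..r} u + integral {-r..-A} u - (r - A) * (u A + u (-A))"
        by (rule one_dim[OF du dv cww A0])
      also have "2 * r * T i p = (r - A) * (u A + u (-A))"
        unfolding T_def A_def[symmetric] u_def uq using r by simp
      finally show ?thesis unfolding q_def by simp
    qed
  qed
  have K0: "integral\<^sup>L lborel (K i) = 0" for i
  proof (rule fub_zero[OF _ intK])
    show "axis i (1::real) \<in> Basis" by simp
    fix p :: "(real,'n) vec" assume "p \<bullet> axis i 1 = 0"
    then have "p$i = 0" by (simp add: inner_axis)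
    then show "(\<integral>y. K i (p + y *\<^sub>R axis i 1) \<partial>lborel) = 0" by (rule line)
  qed
  have E2: "integral\<^sup>L lborel (\<lambda>x. indicator (I \<inter> Rset i) x * h x)
      = integral\<^sup>L lborel (\<lambda>x. indicator I x * (w i x * \<Phi> x + T i x))" for i
    using K0[of i] int1[of i] int2[of i] unfolding K_def[abs_def] by simp
  have E1: "(\<lambda>x. indicator I x * h x) = (\<lambda>x. \<Sum>i\<in>UNIV. indicator (I \<inter> Rset i) x * h x)"
  proof
    fix x
    have eqs: "(\<Sum>i\<in>UNIV. indicator (I \<inter> Rset i) x * h x) = (\<Sum>i\<in>UNIV. indicator (Rset i) x) * (indicator I x * h x)"
      by (simp add: sum_distrib_right sum_distrib_left indicator_inter_arith mult.assoc mult.commute mult.left_commute)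
    show "indicator I x * h x = (\<Sum>i\<in>UNIV. indicator (I \<inter> Rset i) x * h x)"
      using eqs[unfolded Rset_sum mult_1] by (rule sym)
  qed
  have "integral\<^sup>L lborel (\<lambda>x. indicator I x * h x) = (\<Sum>i\<in>UNIV. integral\<^sup>L lborel (\<lambda>x. indicator (I \<inter> Rset i) x * h x))"
    unfolding E1 by (rule Bochner_Integration.integral_sum) (rule int2)
  also have "\<dots> = (\<Sum>i\<in>UNIV. integral\<^sup>L lborel (\<lambda>x. indicator I x * (w i x * \<Phi> x + T i x)))"
    by (simp add: E2)
  also have "\<dots> = integral\<^sup>L lborel (\<lambda>x. \<Sum>i\<in>UNIV. indicator I x * (w i x * \<Phi> x + T i x))"
    by (rule Bochner_Integration.integral_sum[symmetric]) (rule int1)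
  also have "\<dots> \<le> integral\<^sup>L lborel (\<lambda>x::(real,'n) vec. 0::real)"
  proof (rule Bochner_Integration.integral_mono)
    show "integrable lborel (\<lambda>x. \<Sum>i\<in>UNIV. indicator I x * (w i x * \<Phi> x + T i x))"
      by (rule Bochner_Integration.integrable_sum) (rule int1)
    show "integrable lborel (\<lambda>x. 0::real)" by simp
    fix x :: "(real,'n) vec"
    show "(\<Sum>i\<in>UNIV. indicator I x * (w i x * \<Phi> x + T i x)) \<le> 0"
    proof (cases "x \<in> I")
      case False then show ?thesis by simp
    next
      case True
      have "(\<Sum>i\<in>UNIV. indicator I x * (w i x * \<Phi> x + T i x)) = \<Phi> x * (\<Sum>i\<in>UNIV. w i x) + (\<Sum>i\<in>UNIV. T i x)"
        using True by (simp add: sum.distrib sum_distrib_left mult.commute)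
      also have "(\<Sum>i\<in>UNIV. w i x) = 0" unfolding w_def using LAP True IS by auto
      also have "(\<Sum>i\<in>UNIV. T i x) \<le> 0" by (rule sum_nonpos) (use Tnp True in auto)
      finally show ?thesis by simp
    qed
  qed
  finally show ?thesis by simp
qed


lemma L1_lborel:
  fixes I :: "(real^('n::{finite,linorder})) set" and u :: "real^('n::{finite,linorder}) \<Rightarrow> real"
  assumes bI: "I \<in> sets borel" and cu: "continuous_on I u"
  shows "L1_norm I u = integral\<^sup>L lborel (\<lambda>x. indicator I x * \<bar>u x\<bar>)"
proof -
  have m: "(\<lambda>x. indicator I x *\<^sub>R \<bar>u x\<bar>) \<in> borel_measurable borel"
    by (rule borel_measurable_continuous_on_indicator[OF bI]) (intro continuous_intros cu)
  have "L1_norm I u = integral\<^sup>L lebesgue (\<lambda>x. indicator I x *\<^sub>R \<bar>u x\<bar>)"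
    unfolding L1_norm_def by (rule integral_restrict_space) (use bI in auto)
  also have "\<dots> = integral\<^sup>L lborel (\<lambda>x. indicator I x *\<^sub>R \<bar>u x\<bar>)"
    by (rule integral_completion) (use m in simp)
  finally show ?thesis by simp
qed

theorem corollary3:
  fixes r :: real and I :: "(real^('n::{finite,linorder})) set" and g f :: "real^('n::{finite,linorder}) \<Rightarrow> real"
  assumes "CARD('n::{finite,linorder}) \<ge> 2"
    and "r > 0"
    and "I = {x. \<forall>i. \<bar>x $ i\<bar> \<le> r}"
    and "continuous_on I g"
    and "\<forall>x\<in>I. g x \<ge> 0"
    and "\<And>x. f x = g x * (\<Prod>p\<in>{(i, j). i < j}. ((x $ fst p)^2 - (x $ snd p)^2)^2)"
  shows "(\<forall>x\<in>I. 0 \<le> f x) \<and> (\<forall>h\<in>harm_below I f. L1_norm I f \<le> L1_norm I (\<lambda>x. f x - h x))"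
proof -
  note card = assms(1) and r = assms(2) and Idef = assms(3) and cg = assms(4) and g0 = assms(5) and fdef = assms(6)
  have f0: "\<forall>x\<in>I. 0 \<le> f x"
    using g0 by (auto simp: fdef intro!: mult_nonneg_nonneg prod_nonneg)
  have Icbox: "I = cbox (\<chi> i. -r) (\<chi> i. r)"
    unfolding Idef by (auto simp: mem_box_cart abs_le_iff minus_le_iff[of _ r])
  have bI: "I \<in> sets borel" unfolding Icbox by simp
  have cI: "compact I" unfolding Icbox by simp
  have ff: "f = (\<lambda>x. g x * (\<Prod>p\<in>{(i, j). i < j}. ((x $ fst p)^2 - (x $ snd p)^2)^2))"
    using fdef by auto
  have cf: "continuous_on I f" unfolding ff by (intro continuous_intros cg)
  have "L1_norm I f \<le> L1_norm I (\<lambda>x. f x - h x)" if hb: "h \<in> harm_below I f" for h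
  proof -
    from hb obtain S where IS: "I \<subseteq> S" and hS: "harmonic_on S h" and hf: "\<And>x. x \<in> I \<Longrightarrow> h x \<le> f x"
      unfolding harm_below_def harm_def by auto
    have hc: "continuous_on I h"
      using hS IS unfolding harmonic_on_def by (auto intro: continuous_on_subset)
    have hD: "h x \<le> 0" if xI: "x \<in> I" and ij: "i \<noteq> j" and eq: "\<bar>x$i\<bar> = \<bar>x$j\<bar>" for x i j
    proof -
      have fin: "finite {(i::'n, j). i < j}" by simp
      have "f x = 0"
      proof -
        have "(\<Prod>p\<in>{(i, j). i < j}. ((x $ fst p)^2 - (x $ snd p)^2)^2) = 0"
        proof (rule prod_zero[OF fin])
          have sq: "(x$i)^2 = (x$j)^2" using eq by (metis power2_abs)
          show "\<exists>p\<in>{(i, j). i < j}. ((x $ fst p)^2 - (x $ snd p)^2)^2 = 0"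
          proof (cases "i < j")
            case True then show ?thesis using sq by (intro bexI[of _ "(i,j)"]) auto
          next
            case False then have "j < i" using ij by auto
            then show ?thesis using sq by (intro bexI[of _ "(j,i)"]) auto
          qed
        qed
        then show ?thesis by (simp add: fdef)
      qed
      then show ?thesis using hf[OF xI] by simp
    qed
    have hint: "integral\<^sup>L lborel (\<lambda>x. indicator I x * h x) \<le> 0"
      by (rule harm_int_nonpos[OF card r Idef IS hS hD])
    have i1: "integrable lborel (\<lambda>x. indicator I x * f x)"
      using borel_integrable_compact[OF cI cf] by simp
    have i2: "integrable lborel (\<lambda>x. indicator I x * h x)"
      using borel_integrable_compact[OF cI hc] by simp
    have "L1_norm I f = integral\<^sup>L lborel (\<lambda>x. indicator I x * f x)"
      unfolding L1_lborel[OF bI cf] using f0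
      by (intro Bochner_Integration.integral_cong) (auto simp: indicator_def)
    also have "\<dots> \<le> integral\<^sup>L lborel (\<lambda>x. indicator I x * f x) - integral\<^sup>L lborel (\<lambda>x. indicator I x * h x)"
      using hint by simp
    also have "\<dots> = integral\<^sup>L lborel (\<lambda>x. indicator I x * f x - indicator I x * h x)"
      using i1 i2 by simp
    also have "\<dots> = L1_norm I (\<lambda>x. f x - h x)"
    proof -
      have c: "continuous_on I (\<lambda>x. f x - h x)" by (intro continuous_intros cf hc)
      show ?thesis
        unfolding L1_lborel[OF bI c] using hf
        by (intro Bochner_Integration.integral_cong) (auto simp: indicator_def)
    qed
    finally show ?thesis .
  qed
  with f0 show ?thesis by blast
qed

end
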